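(* Let $X$ be a non-reflexive real Banach space. Let $Z=X\times X^*$ with norm $\|(x,x^* )\|=\sqrt{\|x\|^2+\|x^*\|^2}$, so that $Z^*=X^*\times X^{**}$ with norm $\|(y^*,y^{**})\|=\sqrt{\|y^*\|^2+\|y^{**}\|^2}$, paired with $Z$ by $\langle (x,x^* ),(y^*,y^{**})\rangle=\langle x,y^*\rangle+\langle y^{**},x^*\rangle$. Define $h:Z\times Z^*\to\mathbb{R}\cup\{+\infty\}$ by $$h((x,x^* ),(y^*,y^{**}))=\begin{cases}\sqrt{\|x-y^{**}\|^2+\|x^*+y^*\|^2}, & \text{if } y^{**}\in X \text{ and } \|y^*\|^2+\|y^{**}\|^2\leq 1,\\ +\infty,&\text{otherwise.}\end{cases}$$ Then: 1. $h$ is a closed (lower semicontinuous) convex function, $P_2(D(h))$ is bounded, $h(z,z^* )\geq\langle z,z^*\rangle$ and $(\mathcal{J}h)(z,z^* )\geq\langle z,z^*\rangle$ for all $(z,z^* )\in Z\times Z^*$; 2. $T=\{(z,z^* )\in Z\times Z^*\;|\;(\mathcal{J}h)(z,z^* )=\langle z,z^*\rangle\}$ is a maximal monotone operator with bounded range, and $\mathcal{J}h\in\mathcal{F}_T$; 3. $T$ is not of Gossez type (D).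
   Context: $X$ is identified with its canonical image in $X^{**}$, and $Z$ with its image in $Z^{**}=X^{**}\times X^{***}$. $P_1,P_2$ are the canonical projections of $Z\times Z^*$ onto $Z$ and $Z^*$; $D(f)=\{w\;|\;f(w)<\infty\}$. The conjugate of $h$ is $h^*:Z^*\times Z^{**}\to\mathbb{R}\cup\{\pm\infty\}$, $h^*(w^*,w^{**})=\sup_{(z,z^* )\in Z\times Z^*}\langle z,w^*\rangle+\langle w^{**},z^*\rangle-h(z,z^* )$, and $(\mathcal{J}h)(z,z^* )=h^*(z^*,z)$ for $(z,z^* )\in Z\times Z^*$. An operator $T:Z\rightrightarrows Z^*$ is a subset of $Z\times Z^*$, with range $P_2T$; it is monotone if $\langle z-w,z^*-w^*\rangle\geq 0$ for all $(z,z^* ),(w,w^* )\in T$, and maximal monotone if it is monotone and not properly contained in another monotone operator. For maximal monotone $T$, $\mathcal{F}_T$ is the set of convex lower semicontinuous $g:Z\times Z^*\to\mathbb{R}\cup\{\pm\infty\}$ with $g(z,z^* )\geq\langle z,z^*\rangle$ everywhere and equality on $T$. A maximal monotone $T:Z\rightrightarrows Z^*$ is of Gossez type (D) if every $(z^{**},z^* )\in Z^{**}\times Z^*$ satisfying $\langle z^{**}-w,z^*-w^*\rangle\geq 0$ for all $(w,w^* )\in T$ is the limit, in the weak-$*$ topology of $Z^{**}$ times the norm topology of $Z^*$, of a bounded net of points of $T$. *)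

theory Defs
  imports "HOL-Analysis.Analysis"
begin

type_synonym 'a dual = "'a \<Rightarrow>\<^sub>L real"

definition canon :: "'a::real_normed_vector \<Rightarrow> 'a dual dual" where
  "canon x = Blinfun (\<lambda>f. blinfun_apply f x)"

text \<open>Z = X \<times> X*, Z* = X* \<times> X**, Z** = X** \<times> X***; duality pairings.\<close>
definition pairZ :: "'a::real_normed_vector \<times> 'a dual \<Rightarrow> 'a dual \<times> 'a dual dual \<Rightarrow> real" where
  "pairZ z w = blinfun_apply (fst w) (fst z) + blinfun_apply (snd w) (snd z)"

definition pairZZ :: "'a::real_normed_vector dual dual \<times> 'a dual dual dual \<Rightarrow> 'a dual \<times> 'a dual dual \<Rightarrow> real" where
  "pairZZ u w = blinfun_apply (fst u) (fst w) + blinfun_apply (snd u) (snd w)"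

definition embZ :: "'a::real_normed_vector \<times> 'a dual \<Rightarrow> 'a dual dual \<times> 'a dual dual dual" where
  "embZ z = (canon (fst z), canon (snd z))"

definition hfun :: "('a::real_normed_vector \<times> 'a dual) \<times> ('a dual \<times> 'a dual dual) \<Rightarrow> ereal" where
  "hfun p = (let x = fst (fst p); xs = snd (fst p); ys = fst (snd p); yss = snd (snd p) in
     if yss \<in> range canon \<and> (norm ys)\<^sup>2 + (norm yss)\<^sup>2 \<le> 1
     then ereal (sqrt ((norm (canon x - yss))\<^sup>2 + (norm (xs + ys))\<^sup>2))
     else \<infinity>)"

definition conjZ :: "(('a::real_normed_vector \<times> 'a dual) \<times> ('a dual \<times> 'a dual dual) \<Rightarrow> ereal)
    \<Rightarrow> ('a dual \<times> 'a dual dual) \<times> ('a dual dual \<times> 'a dual dual dual) \<Rightarrow> ereal" where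
  "conjZ h q = (SUP p. ereal (pairZ (fst p) (fst q) + pairZZ (snd q) (snd p)) - h p)"

definition JZ :: "(('a::real_normed_vector \<times> 'a dual) \<times> ('a dual \<times> 'a dual dual) \<Rightarrow> ereal)
    \<Rightarrow> ('a \<times> 'a dual) \<times> ('a dual \<times> 'a dual dual) \<Rightarrow> ereal" where
  "JZ h p = conjZ h (snd p, embZ (fst p))"

definition ext_convex :: "('b::real_vector \<Rightarrow> ereal) \<Rightarrow> bool" where
  "ext_convex f \<longleftrightarrow> convex {(w, t::real). f w \<le> ereal t}"

definition ext_closed :: "('b::topological_space \<Rightarrow> ereal) \<Rightarrow> bool" where
  "ext_closed f \<longleftrightarrow> closed {(w, t::real). f w \<le> ereal t}"

definition monotone_opZ :: "(('a::real_normed_vector \<times> 'a dual) \<times> ('a dual \<times> 'a dual dual)) set \<Rightarrow> bool" where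
  "monotone_opZ T \<longleftrightarrow> (\<forall>p\<in>T. \<forall>q\<in>T. pairZ (fst p - fst q) (snd p - snd q) \<ge> 0)"

definition maximal_monotoneZ :: "(('a::real_normed_vector \<times> 'a dual) \<times> ('a dual \<times> 'a dual dual)) set \<Rightarrow> bool" where
  "maximal_monotoneZ T \<longleftrightarrow> monotone_opZ T \<and> (\<forall>S. monotone_opZ S \<and> T \<subseteq> S \<longrightarrow> S = T)"

definition fitz_family :: "(('a::real_normed_vector \<times> 'a dual) \<times> ('a dual \<times> 'a dual dual)) set
    \<Rightarrow> (('a \<times> 'a dual) \<times> ('a dual \<times> 'a dual dual) \<Rightarrow> ereal) \<Rightarrow> bool" where
  "fitz_family T g \<longleftrightarrow> ext_convex g \<and> ext_closed g
     \<and> (\<forall>p. g p \<ge> ereal (pairZ (fst p) (snd p)))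
     \<and> (\<forall>p\<in>T. g p = ereal (pairZ (fst p) (snd p)))"

text \<open>Nets are represented by filters on Z \<times> Z* (the net being the identity map);
  "bounded net of points of T" means the filter lives on a bounded subset of T.
  Convergence: weak-* in Z** (tested against every element of Z*) in the first component,
  norm in Z* in the second.\<close>
definition gossez_D :: "(('a::real_normed_vector \<times> 'a dual) \<times> ('a dual \<times> 'a dual dual)) set \<Rightarrow> bool" where
  "gossez_D T \<longleftrightarrow> maximal_monotoneZ T \<and>
     (\<forall>(zss :: 'a dual dual \<times> 'a dual dual dual) (zs :: 'a dual \<times> 'a dual dual).
        (\<forall>q\<in>T. pairZZ (zss - embZ (fst q)) (zs - snd q) \<ge> 0) \<longrightarrow>
        (\<exists>F B. F \<noteq> bot \<and> B \<subseteq> T \<and> bounded B \<and> F \<le> principal B \<and>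
           (\<forall>ws. ((\<lambda>p. pairZ (fst p) ws) \<longlongrightarrow> pairZZ zss ws) F) \<and>
           ((\<lambda>p. snd p) \<longlongrightarrow> zs) F))"

end

theory Submission
  imports Defs
begin


lemma hb_cone:
  fixes K :: "('a::real_vector \<times> real) set"
  assumes add: "\<And>p q. p \<in> K \<Longrightarrow> q \<in> K \<Longrightarrow> p + q \<in> K"
    and scal: "\<And>p \<mu>. p \<in> K \<Longrightarrow> \<mu> \<ge> 0 \<Longrightarrow> \<mu> *\<^sub>R p \<in> K"
    and tot: "\<And>y. \<exists>t. (y, t) \<in> K"
    and pos: "\<And>t. (0, t) \<in> K \<Longrightarrow> t \<ge> 0"
  shows "\<exists>h. linear h \<and> (\<forall>y t. (y, t) \<in> K \<longrightarrow> h y \<le> t)"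
proof -
  define A where "A = {L. K \<subseteq> L \<and> (\<forall>p\<in>L. \<forall>q\<in>L. p + q \<in> L) \<and> (\<forall>p\<in>L. \<forall>\<mu>\<ge>0. \<mu> *\<^sub>R p \<in> L)
      \<and> (\<forall>t. (0, t) \<in> L \<longrightarrow> t \<ge> 0)}"
  have KA: "K \<in> A" unfolding A_def using add scal pos by auto
  have "\<forall>C\<in>chains A. \<exists>U\<in>A. \<forall>X\<in>C. X \<subseteq> U"
  proof
    fix C assume C: "C \<in> chains A"
    show "\<exists>U\<in>A. \<forall>X\<in>C. X \<subseteq> U"
    proof (cases "C = {}")
      case True then show ?thesis using KA by auto
    next
      case False
      have CA: "C \<subseteq> A" and ch: "\<forall>X\<in>C. \<forall>Y\<in>C. X \<subseteq> Y \<or> Y \<subseteq> X"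
        using C unfolding chains_def chain_subset_def by auto
      have "\<Union>C \<in> A" unfolding A_def
      proof (intro CollectI conjI ballI allI impI)
        obtain X where "X \<in> C" using False by blast
        then show "K \<subseteq> \<Union>C" using CA unfolding A_def by blast
      next
        fix p q assume "p \<in> \<Union>C" "q \<in> \<Union>C"
        then obtain X Y where XY: "X \<in> C" "Y \<in> C" "p \<in> X" "q \<in> Y" by auto
        from ch XY(1,2) have "X \<subseteq> Y \<or> Y \<subseteq> X" by auto
        then show "p + q \<in> \<Union>C"
        proof
          assume "X \<subseteq> Y" then have "p + q \<in> Y" using XY CA unfolding A_def by blast
          then show ?thesis using XY by auto
        next
          assume "Y \<subseteq> X" then have "p + q \<in> X" using XY CA unfolding A_def by blast
          then show ?thesis using XY by auto
        qed
      next
        fix p \<mu> assume "p \<in> \<Union>C" "(\<mu>::real) \<ge> 0"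
        then show "\<mu> *\<^sub>R p \<in> \<Union>C" using CA unfolding A_def by blast
      next
        fix t assume "(0, t) \<in> \<Union>C"
        then show "t \<ge> 0" using CA unfolding A_def by blast
      qed
      then show ?thesis by auto
    qed
  qed
  from Zorn_Lemma2[OF this] obtain M where MA: "M \<in> A" and maxM: "\<forall>X\<in>A. M \<subseteq> X \<longrightarrow> X = M" by blast
  have KM: "K \<subseteq> M" and Madd: "\<And>p q. p \<in> M \<Longrightarrow> q \<in> M \<Longrightarrow> p + q \<in> M"
    and Mscal: "\<And>p \<mu>. p \<in> M \<Longrightarrow> \<mu> \<ge> 0 \<Longrightarrow> \<mu> *\<^sub>R p \<in> M"
    and Mpos: "\<And>t. (0, t) \<in> M \<Longrightarrow> t \<ge> 0" using MA unfolding A_def by auto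
  define h where "h y = Inf {t. (y, t) \<in> M}" for y
  have ne: "{t. (y, t) \<in> M} \<noteq> {}" for y using tot KM by blast
  have bdd: "bdd_below {t. (y, t) \<in> M}" for y
  proof -
    obtain t0 where "(-y, t0) \<in> K" using tot by blast
    then have t0: "(-y, t0) \<in> M" using KM by auto
    have "-t0 \<le> t" if "(y, t) \<in> M" for t
    proof -
      have "(y, t) + (-y, t0) \<in> M" using Madd that t0 by blast
      then have "(0, t + t0) \<in> M" by simp
      then show ?thesis using Mpos by fastforce
    qed
    then show ?thesis unfolding bdd_below_def by blast
  qed
  have hle: "h y \<le> t" if "(y, t) \<in> M" for y t
    unfolding h_def using that bdd by (intro cInf_lower) auto
  have hge: "t \<le> h y" if "\<And>s. (y, s) \<in> M \<Longrightarrow> t \<le> s" for y t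
    unfolding h_def using that ne by (intro cInf_greatest) auto

  have approx: "\<exists>s. (y, s) \<in> M \<and> s < h y + e" if "e > 0" for y e
  proof (rule ccontr)
    assume "\<not> ?thesis"
    then have "h y + e \<le> h y" using hge[of y "h y + e"] by force
    then show False using that by simp
  qed
  have sub: "h (x + y) \<le> h x + h y" for x y
  proof -
    have "h (x + y) \<le> h x + h y + e" if epos: "e > 0" for e
    proof -
      obtain s1 where s1: "(x, s1) \<in> M" "s1 < h x + e/2" using approx[of "e/2" x] epos by (meson half_gt_zero)
      obtain s2 where s2: "(y, s2) \<in> M" "s2 < h y + e/2" using approx[of "e/2" y] epos by (meson half_gt_zero)
      have "(x, s1) + (y, s2) \<in> M" using Madd s1 s2 by blast
      then have "h (x + y) \<le> s1 + s2" using hle by simp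
      then show ?thesis using s1 s2 by simp
    qed
    then show ?thesis by (meson field_le_epsilon)
  qed
  have homp: "h (c *\<^sub>R x) = c * h x" if "c > 0" for c x
  proof (rule antisym)
    have "h (c *\<^sub>R x) \<le> c * s" if "(x, s) \<in> M" for s
      using hle[of "c *\<^sub>R x" "c * s"] Mscal[OF that, of c] \<open>c > 0\<close> by simp
    then have "h (c *\<^sub>R x) / c \<le> s" if "(x, s) \<in> M" for s
      using that \<open>c>0\<close> by (simp add: divide_le_eq mult.commute[of c])
    then have "h (c *\<^sub>R x) / c \<le> h x" using hge by blast
    then show "h (c *\<^sub>R x) \<le> c * h x" using \<open>c>0\<close> by (simp add: divide_le_eq mult.commute)
  next
    have "h x \<le> s / c" if "(c *\<^sub>R x, s) \<in> M" for s
    proof -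
      have "(inverse c) *\<^sub>R (c *\<^sub>R x, s) \<in> M" using Mscal[OF that, of "inverse c"] \<open>c>0\<close> by simp
      then have "(x, s / c) \<in> M" using \<open>c>0\<close> by (simp add: divide_inverse mult.commute)
      then show ?thesis using hle by blast
    qed
    then have "c * h x \<le> s" if "(c *\<^sub>R x, s) \<in> M" for s
      using that \<open>c>0\<close> by (simp add: le_divide_eq mult.commute)
    then show "c * h x \<le> h (c *\<^sub>R x)" using hge by blast
  qed
  have h0: "h 0 = 0"
  proof (rule antisym)
    obtain s where s: "(0::'a, s) \<in> M" using ne by blast
    have "h 0 \<le> 0 * s" using hle[of "0::'a" "0 * s"] Mscal[OF s, of "0::real"] by simp
    then show "h 0 \<le> 0" by simp
    show "0 \<le> h 0" using hge Mpos by blast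
  qed

  have neg: "h y + h (- y) \<le> 0" for y
  proof -
    define c where "c = - h (- y)"
    define L where "L = {(k + \<mu> *\<^sub>R y, t + \<mu> * c) | k t \<mu>. (k, t) \<in> M \<and> \<mu> \<ge> 0}"
    have Lmem: "(k + m *\<^sub>R y, t + m * c) \<in> L" if "(k, t) \<in> M" "m \<ge> 0" for k t m
      unfolding L_def using that by blast
    have MsubL: "M \<subseteq> L" using Lmem[where m=0] by force
    have "L \<in> A" unfolding A_def
    proof (intro CollectI conjI ballI allI impI)
      show "K \<subseteq> L" using KM MsubL by auto
    next
      fix p q assume "p \<in> L" "q \<in> L"
      then obtain k1 t1 m1 k2 t2 m2 where "(k1, t1) \<in> M" "m1 \<ge> 0" "p = (k1 + m1 *\<^sub>R y, t1 + m1 * c)"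
        "(k2, t2) \<in> M" "m2 \<ge> 0" "q = (k2 + m2 *\<^sub>R y, t2 + m2 * c)" unfolding L_def by blast
      moreover have "(k1, t1) + (k2, t2) \<in> M" using calculation Madd by blast
      ultimately show "p + q \<in> L" using Lmem[of "k1 + k2" "t1 + t2" "m1 + m2"]
        by (simp add: algebra_simps scaleR_add_left)
    next
      fix p and \<nu>::real assume "p \<in> L" "\<nu> \<ge> 0"
      then obtain k t m where "(k, t) \<in> M" "m \<ge> 0" "p = (k + m *\<^sub>R y, t + m * c)" unfolding L_def by blast
      moreover have "\<nu> *\<^sub>R (k, t) \<in> M" using calculation Mscal \<open>\<nu> \<ge> 0\<close> by blast
      ultimately show "\<nu> *\<^sub>R p \<in> L" using \<open>\<nu> \<ge> 0\<close> Lmem[of "\<nu> *\<^sub>R k" "\<nu> * t" "\<nu> * m"]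
        by (simp add: algebra_simps scaleR_add_right)
    next
      fix s assume "(0, s) \<in> L"
      then obtain k t m where km: "(k, t) \<in> M" "m \<ge> 0" "0 = k + m *\<^sub>R y" "s = t + m * c"
        unfolding L_def by auto
      show "s \<ge> 0"
      proof (cases "m = 0")
        case True then show ?thesis using km Mpos by auto
      next
        case False
        then have mpos: "m > 0" using km by auto
        have "k = m *\<^sub>R (- y)" using km(3) by (simp add: eq_neg_iff_add_eq_0 add.commute)
        then have "h (m *\<^sub>R (- y)) \<le> t" using hle km by blast
        then have "m * h (- y) \<le> t" using homp[OF mpos, of "- y"] by simp
        then show ?thesis using km c_def by simp
      qed
    qed
    then have "L = M" using maxM MsubL by blast
    moreover have "(y, c) \<in> L"
    proof -
      obtain s where s: "(0::'a, s) \<in> M" using ne by blast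
      have "(0::'a, 0::real) = 0 *\<^sub>R (0::'a, s)" by simp
      then have "(0::'a, 0::real) \<in> M" using Mscal[OF s, of "0::real"] by simp
      then show ?thesis using Lmem[of "0::'a" "0::real" 1] by simp
    qed
    ultimately have "h y \<le> c" using hle by blast
    then show ?thesis using c_def by simp
  qed
  have negeq: "h (- y) = - h y" for y
  proof -
    have "h y + h (- y) \<ge> h (y + - y)" using sub by blast
    then have "h y + h (- y) \<ge> 0" using h0 by simp
    then show ?thesis using neg[of y] by simp
  qed
  have addh: "h (x + y) = h x + h y" for x y
  proof -
    have "h x \<le> h (x + y) + h (- y)" using sub[of "x + y" "- y"] by simp
    then show ?thesis using sub[of x y] negeq[of y] by simp
  qed
  have scalh: "h (c *\<^sub>R x) = c * h x" for c x
  proof -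
    consider "c > 0" | "c = 0" | "c < 0" by linarith
    then show ?thesis
    proof cases
      case 1 then show ?thesis using homp by blast
    next
      case 2 then show ?thesis using h0 by simp
    next
      case 3
      have "h (c *\<^sub>R x) = h (- ((- c) *\<^sub>R x))" by simp
      also have "\<dots> = - h ((- c) *\<^sub>R x)" using negeq by blast
      also have "\<dots> = c * h x" using homp[of "- c" x] 3 by simp
      finally show ?thesis .
    qed
  qed
  have "linear h" by (rule linearI) (use addh scalh in auto)
  moreover have "\<forall>y t. (y, t) \<in> K \<longrightarrow> h y \<le> t" using hle KM by blast
  ultimately show ?thesis by blast
qed



lemma canon_apply[simp]: "blinfun_apply (canon x) f = blinfun_apply f x"
  unfolding canon_def by (subst bounded_linear_Blinfun_apply) auto

lemma canon_add: "canon (x + y) = canon x + canon y"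
  by (rule blinfun_eqI) (simp add: blinfun.bilinear_simps)
lemma canon_diff: "canon (x - y) = canon x - canon y"
  by (rule blinfun_eqI) (simp add: blinfun.bilinear_simps)
lemma canon_minus: "canon (- x) = - canon x"
  by (rule blinfun_eqI) (simp add: blinfun.bilinear_simps)
lemma canon_scaleR: "canon (c *\<^sub>R x) = c *\<^sub>R canon x"
  by (rule blinfun_eqI) (simp add: blinfun.bilinear_simps)
lemma canon_zero[simp]: "canon 0 = 0"
  by (rule blinfun_eqI) simp

lemma norm_canon_le: "norm (canon x) \<le> norm x"
proof (rule norm_blinfun_bound)
  fix f :: "'a dual"
  have "norm (blinfun_apply f x) \<le> norm f * norm x" by (rule norm_blinfun)
  then show "norm (blinfun_apply (canon x) f) \<le> norm x * norm f" by (simp add: mult.commute)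
qed simp

lemma bounded_linear_canon: "bounded_linear canon"
  by (rule bounded_linear_intro[where K=1]) (simp_all add: canon_add canon_scaleR norm_canon_le)

lemma blinfun_le_norm: "blinfun_apply f x \<le> norm f * norm x"
proof -
  have "\<bar>blinfun_apply f x\<bar> \<le> norm f * norm x" using norm_blinfun[of f x] by simp
  then show ?thesis by linarith
qed

lemma approx1:
  fixes f :: "'b::real_normed_vector \<Rightarrow>\<^sub>L real"
  assumes e: "e > 0"
  shows "\<exists>u. norm u \<le> 1 \<and> blinfun_apply f u \<ge> norm f - e"
proof (rule ccontr)
  assume "\<not> ?thesis"
  then have lt: "\<And>u. norm u \<le> 1 \<Longrightarrow> blinfun_apply f u < norm f - e" by force
  have nf: "norm f - e \<ge> 0" using lt[of 0] by simp
  have "norm (blinfun_apply f x) \<le> (norm f - e) * norm x" for x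
  proof (cases "x = 0")
    case True then show ?thesis by simp
  next
    case False
    then have nx: "norm x > 0" by simp
    have "blinfun_apply f ((1 / norm x) *\<^sub>R x) < norm f - e" using lt[of "(1 / norm x) *\<^sub>R x"] nx by simp
    then have a: "blinfun_apply f x / norm x < norm f - e" by (simp add: blinfun.scaleR_right)
    have "blinfun_apply f ((1 / norm x) *\<^sub>R (- x)) < norm f - e" using lt[of "(1 / norm x) *\<^sub>R (-x)"] nx by simp
    then have b: "- blinfun_apply f x / norm x < norm f - e" by (simp add: blinfun.scaleR_right blinfun.minus_right)
    from a nx have a': "blinfun_apply f x < (norm f - e) * norm x" by (simp add: pos_divide_less_eq)
    from b nx have b': "- blinfun_apply f x < (norm f - e) * norm x" by (simp add: pos_divide_less_eq divide_minus_left[symmetric] del: divide_minus_left)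
    from a' b' have "\<bar>blinfun_apply f x\<bar> \<le> (norm f - e) * norm x" by linarith
    then show ?thesis by simp
  qed
  then have "norm f \<le> norm f - e" using nf by (intro norm_blinfun_bound) auto
  then show False using e by simp
qed

lemma cs2:
  fixes a b c d :: real
  shows "a * b + c * d \<le> sqrt (a\<^sup>2 + c\<^sup>2) * sqrt (b\<^sup>2 + d\<^sup>2)"
proof -
  have "(a * b + c * d)\<^sup>2 \<le> (a\<^sup>2 + c\<^sup>2) * (b\<^sup>2 + d\<^sup>2)"
  proof -
    have "(a\<^sup>2 + c\<^sup>2) * (b\<^sup>2 + d\<^sup>2) - (a * b + c * d)\<^sup>2 = (a * d - c * b)\<^sup>2"
      by (simp add: power2_eq_square algebra_simps)
    moreover have "(a * d - c * b)\<^sup>2 \<ge> 0" by simp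
    ultimately show ?thesis by linarith
  qed
  then have "sqrt ((a * b + c * d)\<^sup>2) \<le> sqrt ((a\<^sup>2 + c\<^sup>2) * (b\<^sup>2 + d\<^sup>2))" by (rule real_sqrt_le_mono)
  then show ?thesis by (simp add: real_sqrt_mult)
qed

lemma norm_pair: "norm (a, b) = sqrt ((norm a)\<^sup>2 + (norm b)\<^sup>2)"
  by (simp add: norm_Pair)

lemma cs_pair:
  fixes a b c d :: real
  assumes "0 \<le> a" "0 \<le> c" "0 \<le> b" "0 \<le> d"
  shows "a * b + c * d \<le> sqrt (a\<^sup>2 + c\<^sup>2) * sqrt (b\<^sup>2 + d\<^sup>2)"
  by (rule cs2)

lemma approx2:
  fixes f :: "'b::real_normed_vector \<Rightarrow>\<^sub>L real" and g :: "'c::real_normed_vector \<Rightarrow>\<^sub>L real"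
  assumes e: "e > 0"
  shows "\<exists>u w. norm (u, w) \<le> 1 \<and> blinfun_apply f u + blinfun_apply g w \<ge> norm (f, g) - e"
proof (cases "norm (f, g) = 0")
  case True then show ?thesis by (intro exI[of _ 0]) (simp add: e less_imp_le)
next
  case False
  define R where "R = norm (f, g)"
  have R: "R > 0" using False R_def by simp
  define \<alpha> where "\<alpha> = norm f"
  define \<beta> where "\<beta> = norm g"
  have R2: "R\<^sup>2 = \<alpha>\<^sup>2 + \<beta>\<^sup>2" unfolding R_def \<alpha>_def \<beta>_def by (simp add: norm_Pair)
  have aR: "\<alpha> \<le> R" "\<beta> \<le> R" unfolding R_def \<alpha>_def \<beta>_def by (auto simp: norm_Pair intro: real_le_rsqrt)
  have a0: "\<alpha> \<ge> 0" "\<beta> \<ge> 0" unfolding \<alpha>_def \<beta>_def by auto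
  obtain u1 where u1: "norm u1 \<le> 1" "blinfun_apply f u1 \<ge> \<alpha> - e/2" using approx1[of "e/2" f] e \<alpha>_def by auto
  obtain w1 where w1: "norm w1 \<le> 1" "blinfun_apply g w1 \<ge> \<beta> - e/2" using approx1[of "e/2" g] e \<beta>_def by auto
  define u where "u = (\<alpha> / R) *\<^sub>R u1"
  define w where "w = (\<beta> / R) *\<^sub>R w1"
  have "(norm (u, w))\<^sup>2 = (\<alpha> / R)\<^sup>2 * (norm u1)\<^sup>2 + (\<beta> / R)\<^sup>2 * (norm w1)\<^sup>2"
    unfolding u_def w_def using R a0 by (simp add: norm_Pair power_mult_distrib power_divide)
  also have "\<dots> \<le> (\<alpha> / R)\<^sup>2 * 1 + (\<beta> / R)\<^sup>2 * 1"
    using u1(1) w1(1) by (intro add_mono mult_left_mono) (auto simp: power_le_one)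
  also have "\<dots> = (\<alpha>\<^sup>2 + \<beta>\<^sup>2) / R\<^sup>2" by (simp add: power_divide add_divide_distrib)
  also have "\<dots> = 1" using R by (simp add: R2[symmetric])
  finally have nuw: "norm (u, w) \<le> 1" by (simp add: power_le_one_iff)
  have "blinfun_apply f u + blinfun_apply g w = (\<alpha> / R) * blinfun_apply f u1 + (\<beta> / R) * blinfun_apply g w1"
    unfolding u_def w_def by (simp add: blinfun.scaleR_right)
  also have "\<dots> \<ge> (\<alpha> / R) * (\<alpha> - e/2) + (\<beta> / R) * (\<beta> - e/2)"
    using u1 w1 R a0 by (intro add_mono mult_left_mono) auto
  also have "(\<alpha> / R) * (\<alpha> - e/2) + (\<beta> / R) * (\<beta> - e/2) = (\<alpha>\<^sup>2 + \<beta>\<^sup>2) / R - (e/2) * ((\<alpha> + \<beta>) / R)"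
    by (simp add: diff_divide_distrib add_divide_distrib power2_eq_square algebra_simps)
  finally have "blinfun_apply f u + blinfun_apply g w \<ge> (\<alpha>\<^sup>2 + \<beta>\<^sup>2) / R - (e/2) * ((\<alpha> + \<beta>) / R)" .
  moreover have "(\<alpha>\<^sup>2 + \<beta>\<^sup>2) / R = R" proof -
    have "\<alpha>\<^sup>2 + \<beta>\<^sup>2 = R * R" using R2 by (simp add: power2_eq_square)
    then show ?thesis using R by simp
  qed
  moreover have "(\<alpha> + \<beta>) / R \<le> 2" using aR R by (simp add: divide_le_eq)
  moreover have "e/2 * ((\<alpha> + \<beta>) / R) \<le> e/2 * 2" using calculation(3) e by (intro mult_left_mono) auto
  ultimately have "blinfun_apply f u + blinfun_apply g w \<ge> R - e" by simp
  then show ?thesis using nuw R_def by blast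
qed

lemma norming:
  fixes x :: "'a::real_normed_vector"
  shows "\<exists>f :: 'a dual. norm f \<le> 1 \<and> blinfun_apply f x = norm x"
proof -
  define K where "K = {(y, t). \<exists>s. norm (y - s *\<^sub>R x) + s * norm x \<le> t}"
  have "\<exists>h. linear h \<and> (\<forall>y t. (y, t) \<in> K \<longrightarrow> h y \<le> t)"
  proof (rule hb_cone)
    fix p q assume "p \<in> K" "q \<in> K"
    then obtain y1 t1 s1 y2 t2 s2 where "p = (y1, t1)" "q = (y2, t2)"
      "norm (y1 - s1 *\<^sub>R x) + s1 * norm x \<le> t1" "norm (y2 - s2 *\<^sub>R x) + s2 * norm x \<le> t2"
      unfolding K_def by auto
    moreover have "norm ((y1 + y2) - (s1 + s2) *\<^sub>R x) \<le> norm (y1 - s1 *\<^sub>R x) + norm (y2 - s2 *\<^sub>R x)"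
      by (rule order_trans[OF _ norm_triangle_ineq]) (simp add: algebra_simps scaleR_add_left)
    ultimately show "p + q \<in> K" unfolding K_def
      by (auto intro!: exI[of _ "s1 + s2"] simp: algebra_simps)
  next
    fix p and \<mu>::real assume "p \<in> K" "\<mu> \<ge> 0"
    then obtain y t s where "p = (y, t)" "norm (y - s *\<^sub>R x) + s * norm x \<le> t" unfolding K_def by auto
    moreover have "norm (\<mu> *\<^sub>R y - (\<mu> * s) *\<^sub>R x) = \<mu> * norm (y - s *\<^sub>R x)"
      proof -
      have "\<mu> *\<^sub>R y - (\<mu> * s) *\<^sub>R x = \<mu> *\<^sub>R (y - s *\<^sub>R x)" by (simp add: algebra_simps)
      then show ?thesis using \<open>\<mu> \<ge> 0\<close> by simp
    qed
    moreover have "\<mu> * (norm (y - s *\<^sub>R x) + s * norm x) \<le> \<mu> * t"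
      using calculation(2) \<open>\<mu> \<ge> 0\<close> by (rule mult_left_mono)
    ultimately have "norm (\<mu> *\<^sub>R y - (\<mu> * s) *\<^sub>R x) + (\<mu> * s) * norm x \<le> \<mu> * t"
      by (simp add: algebra_simps)
    then show "\<mu> *\<^sub>R p \<in> K" unfolding K_def using \<open>p = (y, t)\<close> by auto
  next
    fix y show "\<exists>t. (y, t) \<in> K" unfolding K_def by (rule exI[of _ "norm y"]) (auto intro!: exI[of _ 0])
  next
    fix t assume "(0, t) \<in> K"
    then obtain s where "norm (- (s *\<^sub>R x)) + s * norm x \<le> t" unfolding K_def by auto
    then have "\<bar>s\<bar> * norm x + s * norm x \<le> t" by simp
    moreover have "\<bar>s\<bar> * norm x + s * norm x \<ge> 0"
    proof -
      have "- s \<le> \<bar>s\<bar>" by simp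
      then have "(- s) * norm x \<le> \<bar>s\<bar> * norm x" by (rule mult_right_mono) simp
      then show ?thesis by simp
    qed
    ultimately show "t \<ge> 0" by linarith
  qed
  then obtain h where h: "linear h" "\<And>y t. (y, t) \<in> K \<Longrightarrow> h y \<le> t" by blast
  have hn: "h y \<le> norm y" for y
  proof -
    have "(y, norm y) \<in> K" unfolding K_def by (simp, rule exI[of _ 0], simp)
    then show ?thesis using h(2) by blast
  qed
  have habs: "\<bar>h y\<bar> \<le> norm y" for y
    using hn[of y] hn[of "- y"] linear_neg[OF h(1), of y] by simp
  have bl: "bounded_linear h"
    by (rule bounded_linear_intro[where K=1]) (use h(1) habs in \<open>auto simp: linear_add linear_scale\<close>)
  have hx1: "h (- x) \<le> - norm x"
  proof -
    have "(- x, - norm x) \<in> K" unfolding K_def by (simp, rule exI[of _ "-1"], simp)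
    then show ?thesis using h(2) by blast
  qed
  have hx: "h x = norm x" using hx1 hn[of x] linear_neg[OF h(1), of x] by simp
  define f where "f = Blinfun h"
  have fa: "blinfun_apply f = h" unfolding f_def using bl by (rule bounded_linear_Blinfun_apply)
  have "norm f \<le> 1" by (rule norm_blinfun_bound) (use habs fa in auto)
  then show ?thesis using fa hx by auto
qed

lemma norm_canon[simp]: "norm (canon x) = norm x"
proof (rule antisym)
  show "norm (canon x) \<le> norm x" by (rule norm_canon_le)
  obtain f :: "'a dual" where f: "norm f \<le> 1" "blinfun_apply f x = norm x" using norming by blast
  have "norm x = blinfun_apply (canon x) f" using f by simp
  also have "\<dots> \<le> norm (canon x) * norm f" by (rule blinfun_le_norm)
  also have "\<dots> \<le> norm (canon x)" using f(1) by (simp add: mult_left_le)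
  finally show "norm x \<le> norm (canon x)" .
qed

lemma closed_range_canon: "closed (range (canon :: 'a::banach \<Rightarrow> 'a dual dual))"
proof -
  have "complete (canon ` (UNIV :: 'a set))"
    by (rule complete_isometric_image[where e=1]) (auto simp: bounded_linear_canon complete_UNIV)
  then show ?thesis by (rule complete_imp_closed)
qed



definition Psi :: "('a::real_normed_vector dual \<times> 'a dual dual) \<Rightarrow> ('a dual \<times> 'a dual dual) \<Rightarrow> real" where
  "Psi A w = blinfun_apply (snd A) (fst w) + blinfun_apply (snd w) (fst A)"

definition Aof :: "('a::real_normed_vector \<times> 'a dual) \<times> ('a dual \<times> 'a dual dual) \<Rightarrow> 'a dual \<times> 'a dual dual" where
  "Aof p = (snd (fst p) + fst (snd p), canon (fst (fst p)) - snd (snd p))"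

lemma Aof_simp[simp]: "Aof ((x, xs), (ys, yss)) = (xs + ys, canon x - yss)"
  by (simp add: Aof_def)

lemma pair_Psi: "pairZ (fst p) (snd p) = Psi (Aof p) (snd p)"
  by (cases p) (auto simp: pairZ_def Psi_def Aof_def blinfun.bilinear_simps)

lemma Psi_simp: "Psi (a, b) (y, Y) = blinfun_apply b y + blinfun_apply Y a"
  by (simp add: Psi_def)

lemma Psi_diff_left: "Psi (A - B) w = Psi A w - Psi B w"
  by (cases A; cases B; cases w) (simp add: Psi_def blinfun.bilinear_simps)
lemma Psi_diff_right: "Psi A (w - v) = Psi A w - Psi A v"
  by (cases A; cases v; cases w) (simp add: Psi_def blinfun.bilinear_simps)
lemma Psi_zero_left[simp]: "Psi 0 w = 0"
  by (simp add: Psi_def zero_prod_def)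
lemma Psi_zero_right[simp]: "Psi A 0 = 0"
  by (simp add: Psi_def zero_prod_def)

lemma Aof_diff: "Aof (p - q) = Aof p - Aof q"
  by (simp add: Aof_def canon_diff algebra_simps)

lemma Psi_le: "Psi A w \<le> norm A * norm w"
proof -
  obtain a b where A: "A = (a, b)" by (cases A)
  obtain y Y where w: "w = (y, Y)" by (cases w)
  have "Psi A w \<le> norm b * norm y + norm a * norm Y"
    unfolding A w Psi_simp
  proof (intro add_mono)
    show "blinfun_apply b y \<le> norm b * norm y" by (rule blinfun_le_norm)
    show "blinfun_apply Y a \<le> norm a * norm Y" using blinfun_le_norm[of Y a] by (simp add: mult.commute)
  qed
  also have "\<dots> \<le> sqrt ((norm b)\<^sup>2 + (norm a)\<^sup>2) * sqrt ((norm y)\<^sup>2 + (norm Y)\<^sup>2)" by (rule cs2)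
  also have "\<dots> = norm A * norm w" unfolding A w by (simp add: norm_Pair add.commute)
  finally show ?thesis .
qed

lemma Psi_le1: "norm w \<le> 1 \<Longrightarrow> Psi A w \<le> norm A"
  using Psi_le[of A w] by (metis mult_left_le norm_ge_zero order_trans)

lemma hfun_simp: "hfun ((w1, w2), (v, V)) =
   (if V \<in> range canon \<and> norm (v, V) \<le> 1 then ereal (norm (w2 + v, canon w1 - V)) else \<infinity>)"
  by (simp add: hfun_def norm_Pair add.commute)

lemma val_identity:
  "pairZ (fst r) (snd p) + pairZZ (embZ (fst p)) (snd r)
    = Psi (snd (fst r) + fst (snd r), canon (fst (fst r)) - snd (snd r)) (snd p) + Psi (Aof p) (snd r)"
  by (cases p; cases r) (auto simp: pairZ_def pairZZ_def embZ_def Psi_def blinfun.bilinear_simps)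

lemma JZ_upper:
  assumes "norm (snd p) \<le> 1"
  shows "JZ hfun p \<le> ereal (norm (Aof p))"
  unfolding JZ_def conjZ_def
proof (rule SUP_least)
  fix r :: "('a \<times> 'a dual) \<times> ('a dual \<times> 'a dual dual)"
  obtain w1 w2 v V where r: "r = ((w1, w2), (v, V))" by (cases r) auto
  show "ereal (pairZ (fst r) (fst (snd p, embZ (fst p))) + pairZZ (snd (snd p, embZ (fst p))) (snd r)) - hfun r
      \<le> ereal (norm (Aof p))"
  proof (cases "V \<in> range canon \<and> norm (v, V) \<le> 1")
    case False then have "hfun r = \<infinity>" by (simp add: r hfun_simp)
    then show ?thesis by simp
  next
    case True
    define B where "B = (w2 + v, canon w1 - V)"
    have "pairZ (fst r) (snd p) + pairZZ (embZ (fst p)) (snd r) = Psi B (snd p) + Psi (Aof p) (snd r)"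
      unfolding B_def using val_identity[of "((w1, w2), (v, V))" p] by (simp add: r)
    also have "\<dots> \<le> norm B + norm (Aof p)"
      using True assms by (intro add_mono Psi_le1) (auto simp: r)
    finally show ?thesis using True by (simp add: r hfun_simp B_def)
  qed
qed

lemma JZ_lower:
  "ereal (Psi (Aof p) (w, canon u)) \<le> JZ hfun p" if "norm (u, w) \<le> 1"
proof -
  define r where "r = ((u, - w), (w, canon u))"
  have n: "norm (w, canon u) \<le> 1" using that by (simp add: norm_Pair add.commute)
  have h0: "hfun r = 0" using n by (simp add: r_def hfun_simp zero_ereal_def)
  have "ereal (Psi (Aof p) (w, canon u)) = ereal (pairZ (fst r) (snd p) + pairZZ (embZ (fst p)) (snd r)) - hfun r"
    using h0 val_identity[of r p] unfolding r_def by (simp add: Psi_def)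
  also have "\<dots> \<le> JZ hfun p" unfolding JZ_def conjZ_def by (rule SUP_upper2[of r]) auto
  finally show ?thesis .
qed

lemma JZ_eq:
  assumes "norm (snd p) \<le> 1"
  shows "JZ hfun p = ereal (norm (Aof p))"
proof (rule antisym)
  show "JZ hfun p \<le> ereal (norm (Aof p))" using JZ_upper[OF assms] .
  show "ereal (norm (Aof p)) \<le> JZ hfun p"
  proof (rule ereal_le_epsilon2)
    fix e :: real assume e: "e > 0"
    obtain u w where uw: "norm (u, w) \<le> 1"
      "blinfun_apply (fst (Aof p)) u + blinfun_apply (snd (Aof p)) w \<ge> norm (fst (Aof p), snd (Aof p)) - e"
      using approx2[OF e] by blast
    have "Psi (Aof p) (w, canon u) = blinfun_apply (fst (Aof p)) u + blinfun_apply (snd (Aof p)) w"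
      by (simp add: Psi_def)
    then have "ereal (norm (Aof p)) \<le> ereal (Psi (Aof p) (w, canon u)) + ereal e" using uw by simp
    also have "\<dots> \<le> JZ hfun p + ereal e" using JZ_lower[OF uw(1)] by (rule add_right_mono)
    finally show "ereal (norm (Aof p)) \<le> JZ hfun p + ereal e" .
  qed
qed

lemma JZ_inf:
  assumes "norm (snd p) > 1"
  shows "JZ hfun p = \<infinity>"
proof -
  obtain x xs ys yss where p: "p = ((x, xs), (ys, yss))" by (cases p) auto
  define R where "R = norm (ys, yss)"
  have R: "R > 1" using assms p R_def by simp
  obtain u w where uw: "norm (u, w) \<le> 1" "blinfun_apply ys u + blinfun_apply yss w \<ge> R - (R - 1)/2"
    using approx2[of "(R - 1)/2" ys yss] R R_def by auto
  define \<kappa> where "\<kappa> = blinfun_apply ys u + blinfun_apply yss w - norm (u, w)"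
  have k: "\<kappa> \<ge> (R - 1) / 2"
  proof -
    have "\<kappa> \<ge> R - (R - 1)/2 - 1" using uw unfolding \<kappa>_def by linarith
    then show ?thesis by (simp add: field_simps)
  qed
  have kpos: "\<kappa> > 0" using k R by simp
  show ?thesis
  proof (rule ereal_top)
    fix M :: real
    define t where "t = \<bar>M\<bar> / \<kappa>"
    have t: "t \<ge> 0" using kpos t_def by simp
    define r where "r = ((t *\<^sub>R u, t *\<^sub>R w), (0::'a dual, 0::'a dual dual))"
    have hr: "hfun r = ereal (t * norm (u, w))"
    proof -
      have "norm (t *\<^sub>R w, canon (t *\<^sub>R u)) = t * norm (u, w)"
        using t by (simp add: norm_Pair canon_scaleR add.commute power_mult_distrib real_sqrt_mult
            distrib_left[symmetric])
      then show ?thesis by (simp add: r_def hfun_simp image_iff) (metis canon_zero)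
    qed
    have val: "pairZ (fst r) (fst (snd p, embZ (fst p))) + pairZZ (snd (snd p, embZ (fst p))) (snd r)
        = t * (blinfun_apply ys u + blinfun_apply yss w)"
      by (simp add: r_def p pairZ_def pairZZ_def embZ_def blinfun.bilinear_simps distrib_left)
    have "ereal M \<le> ereal (t * \<kappa>)" using kpos t_def by simp
    also have "\<dots> = ereal (t * (blinfun_apply ys u + blinfun_apply yss w)) - hfun r"
      by (simp add: hr \<kappa>_def right_diff_distrib)
    also have "\<dots> \<le> JZ hfun p" unfolding JZ_def conjZ_def
      by (rule SUP_upper2[of r]) (use val in simp_all)
    finally show "ereal M \<le> JZ hfun p" .
  qed
qed

lemma JZ_formula: "JZ hfun p = (if norm (snd p) \<le> 1 then ereal (norm (Aof p)) else \<infinity>)"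
  using JZ_eq JZ_inf by (metis not_le)



lemma small_aux:
  fixes \<eta> e c M :: real
  assumes "c / (\<eta> * e) < M" "\<eta> > 0" "e > 0" "c > 0"
  shows "c / (\<eta> * M) < e"
proof -
  have "c / (\<eta> * e) > 0" using assms by (intro divide_pos_pos mult_pos_pos)
  then have M: "M > 0" using assms(1) by linarith
  have "c < M * (\<eta> * e)" using assms(1) assms(2,3) by (simp add: divide_less_eq)
  then show ?thesis using M assms(2) by (simp add: divide_less_eq mult.commute mult.left_commute)
qed

lemma phelps:
  fixes f :: "'a::banach dual"
  assumes eta: "\<eta> > 0"
  shows "\<exists>x0. norm x0 \<le> 1 \<and> (\<forall>x. norm x \<le> 1 \<longrightarrow> blinfun_apply f x - blinfun_apply f x0 \<le> \<eta> * norm (x - x0))"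
proof -
  define S where "S x = {y. norm y \<le> 1 \<and> \<eta> * norm (y - x) \<le> blinfun_apply f y - blinfun_apply f x}" for x
  have Srefl: "x \<in> S x" if "norm x \<le> 1" for x using that by (simp add: S_def)
  have Strans: "z \<in> S x" if "y \<in> S x" "z \<in> S y" for x y z
  proof -
    have "\<eta> * norm (z - x) \<le> \<eta> * norm (z - y) + \<eta> * norm (y - x)"
      using norm_triangle_ineq[of "z - y" "y - x"] eta by (simp add: distrib_left[symmetric])
    then show ?thesis using that by (simp add: S_def)
  qed
  have fB: "blinfun_apply f y \<le> norm f" if "norm y \<le> 1" for y
    using blinfun_le_norm[of f y] mult_left_mono[OF that, of "norm f"] by simp
  have bddS: "bdd_above (blinfun_apply f ` S x)" for x
    unfolding bdd_above_def S_def using fB by auto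
  have closedS: "closed (S x)" for x
  proof -
    have "continuous_on UNIV (\<lambda>y. \<eta> * norm (y - x) - (blinfun_apply f y - blinfun_apply f x))"
      by (intro continuous_intros)
    moreover have "S x = {y. norm y \<le> 1} \<inter> {y. \<eta> * norm (y - x) - (blinfun_apply f y - blinfun_apply f x) \<le> 0}"
      by (auto simp: S_def)
    moreover have "closed {y. norm y \<le> (1::real)}"
      by (rule closed_Collect_le) (intro continuous_intros)+
    moreover have "closed {y. \<eta> * norm (y - x) - (blinfun_apply f y - blinfun_apply f x) \<le> 0}"
      by (rule closed_Collect_le) (intro continuous_intros)+
    ultimately show ?thesis by (metis closed_Int)
  qed
  define nxt where "nxt n x = (SOME y. y \<in> S x \<and> Sup (blinfun_apply f ` S x) - 1 / (Suc n) < blinfun_apply f y)" for n x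
  have nxt: "nxt n x \<in> S x \<and> Sup (blinfun_apply f ` S x) - 1 / (Suc n) < blinfun_apply f (nxt n x)"
    if "norm x \<le> 1" for n x
  proof -
    have "S x \<noteq> {}" using Srefl[OF that] by auto
    then have "\<exists>y\<in>S x. Sup (blinfun_apply f ` S x) - 1 / (Suc n) < blinfun_apply f y"
      using less_cSupD[of "blinfun_apply f ` S x" "Sup (blinfun_apply f ` S x) - 1 / (Suc n)"] by force
    then show ?thesis unfolding nxt_def by (rule someI2_bex) auto
  qed
  define xs where "xs n = rec_nat 0 nxt n" for n
  have xs0: "xs 0 = 0" and xsS: "xs (Suc n) = nxt n (xs n)" for n by (simp_all add: xs_def)
  have xsB: "norm (xs n) \<le> 1" for n
  proof (induction n)
    case 0 then show ?case by (simp add: xs0)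
  next
    case (Suc n) then show ?case using nxt[OF Suc] xsS S_def by auto
  qed
  have step: "xs (Suc n) \<in> S (xs n)" for n using nxt[OF xsB] xsS by auto
  have mono: "S (xs m) \<subseteq> S (xs n)" if "n \<le> m" for m n
    using that
  proof (induction m)
    case 0 then show ?case by simp
  next
    case (Suc m)
    show ?case
    proof (cases "n = Suc m")
      case True then show ?thesis by simp
    next
      case False then have "n \<le> m" using Suc by simp
      then have "S (xs m) \<subseteq> S (xs n)" using Suc by blast
      moreover have "S (xs (Suc m)) \<subseteq> S (xs m)" using Strans step by blast
      ultimately show ?thesis by blast
    qed
  qed
  have small: "norm (y - xs (Suc n)) \<le> 1 / (\<eta> * Suc n)" if "y \<in> S (xs (Suc n))" for y n
  proof -
    have yS: "y \<in> S (xs n)" using Strans step that by blast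
    have "blinfun_apply f y \<le> Sup (blinfun_apply f ` S (xs n))" using yS bddS by (intro cSup_upper) auto
    also have "\<dots> < blinfun_apply f (xs (Suc n)) + 1 / (Suc n)" using nxt[OF xsB[of n], of n] unfolding xsS[of n] by linarith
    finally have "\<eta> * norm (y - xs (Suc n)) \<le> 1 / (Suc n)" using that by (simp add: S_def)
    then have "norm (y - xs (Suc n)) \<le> (1 / (Suc n)) / \<eta>" using eta by (simp add: pos_le_divide_eq mult.commute mult.left_commute)
    then show ?thesis by (simp add: divide_divide_eq_left mult.commute)
  qed
  have cauchy: "Cauchy xs"
  proof (rule metric_CauchyI)
    fix e :: real assume e: "e > 0"
    obtain N :: nat where N: "2 / (\<eta> * e) < N" using reals_Archimedean2 by blast
    have "dist (xs m) (xs n) < e" if "m \<ge> Suc N" "n \<ge> Suc N" for m n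
    proof -
      have "xs m \<in> S (xs (Suc N))" using mono[OF that(1)] Srefl[OF xsB[of m]] by (rule subsetD)
      then have a: "norm (xs m - xs (Suc N)) \<le> 1 / (\<eta> * Suc N)" by (rule small)
      have "xs n \<in> S (xs (Suc N))" using mono[OF that(2)] Srefl[OF xsB[of n]] by (rule subsetD)
      then have b: "norm (xs n - xs (Suc N)) \<le> 1 / (\<eta> * Suc N)" by (rule small)
      have c: "1 / (\<eta> * Suc N) < e / 2"
      proof -
        have "real N < real (Suc N)" by simp
        with N have "2 / (\<eta> * e) < Suc N" by (rule less_trans)
        then have "2 / (\<eta> * Suc N) < e" by (rule small_aux[OF _ eta e]) simp
        moreover have "2 / (\<eta> * Suc N) = 2 * (1 / (\<eta> * Suc N))" by simp
        ultimately show ?thesis by linarith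
      qed
      have "dist (xs m) (xs n) \<le> norm (xs m - xs (Suc N)) + norm (xs n - xs (Suc N))"
      proof -
        have "xs m - xs n = (xs m - xs (Suc N)) - (xs n - xs (Suc N))" by simp
        then have "norm (xs m - xs n) \<le> norm (xs m - xs (Suc N)) + norm (xs n - xs (Suc N))"
          by (metis norm_triangle_ineq4)
        then show ?thesis by (simp add: dist_norm)
      qed
      then show ?thesis using a b c by linarith
    qed
    then show "\<exists>M. \<forall>m\<ge>M. \<forall>n\<ge>M. dist (xs m) (xs n) < e" by blast
  qed
  then obtain x0 where lim: "xs \<longlonglongrightarrow> x0" using convergent_eq_Cauchy by blast
  have x0S: "x0 \<in> S (xs n)" for n
  proof (rule closed_sequentially[OF closedS, of "\<lambda>m. xs (m + n)"])
    show "xs (m + n) \<in> S (xs n)" for m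
    proof -
      have "S (xs (m + n)) \<subseteq> S (xs n)" by (rule mono) simp
      then show "xs (m + n) \<in> S (xs n)" using Srefl[OF xsB[of "m + n"]] by blast
    qed
    show "(\<lambda>m. xs (m + n)) \<longlonglongrightarrow> x0" using LIMSEQ_ignore_initial_segment[OF lim, of n] .
  qed
  have x0B: "norm x0 \<le> 1" using x0S[of 0] by (simp add: S_def)
  have "blinfun_apply f x - blinfun_apply f x0 \<le> \<eta> * norm (x - x0)" if xB: "norm x \<le> 1" for x
  proof (rule ccontr)
    assume neg: "\<not> ?thesis"
    then have xS0: "x \<in> S x0" using xB by (simp add: S_def)
    have xSn: "x \<in> S (xs (Suc n))" for n using Strans[OF x0S xS0] .
    have "(\<lambda>n. xs (Suc n)) \<longlonglongrightarrow> x"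
    proof (rule LIMSEQ_I)
      fix r :: real assume r: "r > 0"
      obtain N :: nat where N: "1 / (\<eta> * r) < N" using reals_Archimedean2 by blast
      have "norm (xs (Suc n) - x) < r" if "n \<ge> N" for n
      proof -
        have "norm (x - xs (Suc n)) \<le> 1 / (\<eta> * Suc n)" using small[OF xSn] .
        also have "\<dots> < r"
        proof -
          have "real N < real (Suc n)" using that by simp
          with N have "1 / (\<eta> * r) < Suc n" by (rule less_trans)
          then show ?thesis by (rule small_aux[OF _ eta r]) simp
        qed
        finally show ?thesis by (simp add: norm_minus_commute)
      qed
      then show "\<exists>no. \<forall>n\<ge>no. norm (xs (Suc n) - x) < r" by blast
    qed
    moreover have "(\<lambda>n. xs (Suc n)) \<longlonglongrightarrow> x0" using LIMSEQ_Suc[OF lim] .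
    ultimately have "x = x0" using LIMSEQ_unique by blast
    then show False using neg by simp
  qed
  then show ?thesis using x0B by blast
qed



lemma unit_approx:
  fixes V :: "'b::real_normed_vector \<Rightarrow>\<^sub>L real" and z :: 'b
  assumes z: "norm z = 1" and e: "e > 0"
  shows "\<exists>u. norm u = 1 \<and> blinfun_apply V u \<ge> norm V - e"
proof -
  obtain u1 where u1: "norm u1 \<le> 1" "blinfun_apply V u1 \<ge> norm V - e" using approx1[OF e] by blast
  show ?thesis
  proof (cases "blinfun_apply V u1 > 0")
    case True
    then have "u1 \<noteq> 0" by auto
    then have n: "norm u1 > 0" by simp
    define u where "u = (1 / norm u1) *\<^sub>R u1"
    have "norm u = 1" using n by (simp add: u_def)
    moreover have "blinfun_apply V u = blinfun_apply V u1 / norm u1" by (simp add: u_def blinfun.scaleR_right)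
    moreover have "blinfun_apply V u1 \<le> blinfun_apply V u1 / norm u1"
      using True n u1(1) by (simp add: le_divide_eq mult_left_le)
    ultimately show ?thesis using u1(2) by auto
  next
    case False
    then have nv: "norm V - e \<le> 0" using u1 by simp
    have "blinfun_apply V (- z) = - blinfun_apply V z" by (simp add: blinfun.minus_right)
    then have "blinfun_apply V z \<ge> 0 \<or> blinfun_apply V (- z) \<ge> 0" by linarith
    then show ?thesis using nv z by (metis norm_minus_cancel order_trans)
  qed
qed

lemma bp:
  fixes V :: "'a::banach dual dual"
  assumes nt: "x1 \<noteq> (0::'a)" and d: "\<delta> > 0"
  shows "\<exists>a x0. norm a = 1 \<and> norm x0 = 1 \<and> blinfun_apply a x0 = 1 \<and> blinfun_apply V a \<ge> norm V - \<delta>"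
proof -
  obtain f1 :: "'a dual" where f1: "norm f1 \<le> 1" "blinfun_apply f1 x1 = norm x1" using norming by blast
  have "norm x1 \<le> norm f1 * norm x1" using f1(2) blinfun_le_norm[of f1 x1] by simp
  then have "norm f1 \<ge> 1" using nt by simp
  then have nf1: "norm f1 = 1" using f1 by simp
  obtain f0 :: "'a dual" where f0: "norm f0 = 1" "blinfun_apply V f0 \<ge> norm V - \<delta>/2"
    using unit_approx[OF nf1, of "\<delta>/2" V] d by auto
  define \<eta> where "\<eta> = min (1/2) (\<delta> / (4 * (norm V + 1)))"
  have "norm V \<ge> 0" by simp
  then have "4 * (norm V + 1) > (0::real)" by (simp add: algebra_simps add_pos_nonneg)
  then have "\<delta> / (4 * (norm V + 1)) > 0" using d by (rule divide_pos_pos[rotated])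
  then have eta: "\<eta> > 0" by (simp add: \<eta>_def)
  have eta2: "\<eta> \<le> 1/2" unfolding \<eta>_def by (rule min.cobounded1)
  have eta3: "\<eta> \<le> \<delta> / (4 * (norm V + 1))" unfolding \<eta>_def by (rule min.cobounded2)
  obtain x0 where x0: "norm x0 \<le> 1" and
    ph: "\<And>x. norm x \<le> 1 \<Longrightarrow> blinfun_apply f0 x - blinfun_apply f0 x0 \<le> \<eta> * norm (x - x0)"
    using phelps[OF eta, of f0] by blast
  define K where "K = {(y, t). \<exists>s\<ge>0. \<exists>z. norm z \<le> s \<and>
      \<eta> * norm (y - (z - s *\<^sub>R x0)) + s * blinfun_apply f0 x0 - blinfun_apply f0 z \<le> t}"
  have "\<exists>h. linear h \<and> (\<forall>y t. (y, t) \<in> K \<longrightarrow> h y \<le> t)"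
  proof (rule hb_cone)
    fix p q assume "p \<in> K" "q \<in> K"
    then obtain y1 t1 s1 z1 y2 t2 s2 z2 where pq: "p = (y1, t1)" "q = (y2, t2)" "s1 \<ge> 0" "s2 \<ge> 0"
      "norm z1 \<le> s1" "norm z2 \<le> s2"
      "\<eta> * norm (y1 - (z1 - s1 *\<^sub>R x0)) + s1 * blinfun_apply f0 x0 - blinfun_apply f0 z1 \<le> t1"
      "\<eta> * norm (y2 - (z2 - s2 *\<^sub>R x0)) + s2 * blinfun_apply f0 x0 - blinfun_apply f0 z2 \<le> t2"
      unfolding K_def by blast
    have tri: "norm ((y1 + y2) - ((z1 + z2) - (s1 + s2) *\<^sub>R x0))
        \<le> norm (y1 - (z1 - s1 *\<^sub>R x0)) + norm (y2 - (z2 - s2 *\<^sub>R x0))"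
    proof -
      have "(y1 + y2) - ((z1 + z2) - (s1 + s2) *\<^sub>R x0) = (y1 - (z1 - s1 *\<^sub>R x0)) + (y2 - (z2 - s2 *\<^sub>R x0))"
        by (simp add: algebra_simps scaleR_add_left)
      then show ?thesis by (metis norm_triangle_ineq)
    qed
    have nz: "norm (z1 + z2) \<le> s1 + s2" using pq(5,6) norm_triangle_ineq[of z1 z2] by linarith
    have "\<eta> * norm ((y1 + y2) - ((z1 + z2) - (s1 + s2) *\<^sub>R x0)) + (s1 + s2) * blinfun_apply f0 x0
        - blinfun_apply f0 (z1 + z2) \<le> t1 + t2"
      using pq(7,8) mult_left_mono[OF tri, of \<eta>] eta by (simp add: blinfun.add_right algebra_simps)
    then show "p + q \<in> K" unfolding K_def using pq nz
      by (auto intro!: exI[of _ "s1 + s2"] exI[of _ "z1 + z2"])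
  next
    fix p and \<mu>::real assume "p \<in> K" "\<mu> \<ge> 0"
    then obtain y t s z where pq: "p = (y, t)" "s \<ge> 0" "norm z \<le> s"
      "\<eta> * norm (y - (z - s *\<^sub>R x0)) + s * blinfun_apply f0 x0 - blinfun_apply f0 z \<le> t"
      unfolding K_def by blast
    have e1: "norm (\<mu> *\<^sub>R y - (\<mu> *\<^sub>R z - (\<mu> * s) *\<^sub>R x0)) = \<mu> * norm (y - (z - s *\<^sub>R x0))"
    proof -
      have "\<mu> *\<^sub>R y - (\<mu> *\<^sub>R z - (\<mu> * s) *\<^sub>R x0) = \<mu> *\<^sub>R (y - (z - s *\<^sub>R x0))" by (simp add: algebra_simps)
      then show ?thesis using \<open>\<mu> \<ge> 0\<close> by simp
    qed
    have "\<mu> * (\<eta> * norm (y - (z - s *\<^sub>R x0)) + s * blinfun_apply f0 x0 - blinfun_apply f0 z) \<le> \<mu> * t"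
      using pq(4) \<open>\<mu> \<ge> 0\<close> by (rule mult_left_mono)
    then have "\<eta> * norm (\<mu> *\<^sub>R y - (\<mu> *\<^sub>R z - (\<mu> * s) *\<^sub>R x0)) + (\<mu> * s) * blinfun_apply f0 x0
        - blinfun_apply f0 (\<mu> *\<^sub>R z) \<le> \<mu> * t"
      unfolding e1 by (simp add: blinfun.scaleR_right algebra_simps)
    moreover have "norm (\<mu> *\<^sub>R z) \<le> \<mu> * s" using pq(3) \<open>\<mu> \<ge> 0\<close> by (simp add: mult_left_mono)
    moreover have "\<mu> * s \<ge> 0" using pq(2) \<open>\<mu> \<ge> 0\<close> by simp
    ultimately show "\<mu> *\<^sub>R p \<in> K" unfolding K_def using pq(1)
      by (auto intro!: exI[of _ "\<mu> * s"] exI[of _ "\<mu> *\<^sub>R z"])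
  next
    fix y show "\<exists>t. (y, t) \<in> K" unfolding K_def
      by (rule exI[of _ "\<eta> * norm y"]) (auto intro!: exI[of _ 0])
  next
    fix t assume "(0, t) \<in> K"
    then obtain s z where sz: "s \<ge> 0" "norm z \<le> s"
      "\<eta> * norm (0 - (z - s *\<^sub>R x0)) + s * blinfun_apply f0 x0 - blinfun_apply f0 z \<le> t"
      unfolding K_def by blast
    have "\<eta> * norm (z - s *\<^sub>R x0) + s * blinfun_apply f0 x0 - blinfun_apply f0 z \<ge> 0"
    proof (cases "s = 0")
      case True then show ?thesis using sz eta by simp
    next
      case False
      then have s: "s > 0" using sz by simp
      define x where "x = (1 / s) *\<^sub>R z"
      have xB: "norm x \<le> 1" using s sz(2) by (simp add: x_def divide_le_eq)
      have zx: "z = s *\<^sub>R x" using s by (simp add: x_def)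
      have "s * (blinfun_apply f0 x - blinfun_apply f0 x0) \<le> s * (\<eta> * norm (x - x0))"
        using ph[OF xB] s by (simp add: mult_left_mono)
      moreover have "norm (z - s *\<^sub>R x0) = s * norm (x - x0)"
      proof -
        have "z - s *\<^sub>R x0 = s *\<^sub>R (x - x0)" by (simp add: zx algebra_simps)
        then show ?thesis using s by simp
      qed
      ultimately show ?thesis by (simp add: zx blinfun.scaleR_right algebra_simps)
    qed
    moreover have "\<eta> * norm (0 - (z - s *\<^sub>R x0)) = \<eta> * norm (z - s *\<^sub>R x0)" by (simp add: norm_minus_commute)
    ultimately show "t \<ge> 0" using sz(3) by linarith
  qed
  then obtain h where h: "linear h" "\<And>y t. (y, t) \<in> K \<Longrightarrow> h y \<le> t" by blast
  have hle: "h y \<le> \<eta> * norm y" for y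
  proof -
    have "(y, \<eta> * norm y) \<in> K" unfolding K_def by (simp, rule exI[of _ 0], simp)
    then show ?thesis using h(2) by blast
  qed
  have habs: "\<bar>h y\<bar> \<le> \<eta> * norm y" for y
    using hle[of y] hle[of "- y"] linear_neg[OF h(1), of y] by simp
  have hx: "h (x - x0) \<le> blinfun_apply f0 x0 - blinfun_apply f0 x" if "norm x \<le> 1" for x
  proof -
    have "(x - x0, blinfun_apply f0 x0 - blinfun_apply f0 x) \<in> K" unfolding K_def
      using that by (simp, intro exI[of _ 1], simp, intro exI[of _ x], simp)
    then show ?thesis using h(2) by blast
  qed
  have bl: "bounded_linear h"
    by (rule bounded_linear_intro[where K=\<eta>]) (use h(1) habs in \<open>auto simp: linear_add linear_scale mult.commute\<close>)
  define H where "H = Blinfun h"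
  have Ha: "blinfun_apply H = h" unfolding H_def using bl by (rule bounded_linear_Blinfun_apply)
  have nH: "norm H \<le> \<eta>" by (rule norm_blinfun_bound) (use eta habs Ha in \<open>auto simp: mult.commute\<close>)
  define g where "g = f0 + H"
  have ga: "blinfun_apply g y = blinfun_apply f0 y + h y" for y by (simp add: g_def Ha blinfun.add_left)
  have gmax: "blinfun_apply g x \<le> blinfun_apply g x0" if "norm x \<le> 1" for x
    using hx[OF that] linear_diff[OF h(1), of x x0] by (simp add: ga)
  have g0: "blinfun_apply g x0 \<ge> 0" using gmax[of 0] by (simp add: ga linear_0[OF h(1)])
  have ng: "norm g \<le> blinfun_apply g x0"
  proof (rule norm_blinfun_bound[OF g0])
    fix y
    show "norm (blinfun_apply g y) \<le> blinfun_apply g x0 * norm y"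
    proof (cases "y = 0")
      case True then show ?thesis by simp
    next
      case False
      then have ny: "norm y > 0" by simp
      have a: "blinfun_apply g ((1 / norm y) *\<^sub>R y) \<le> blinfun_apply g x0" using ny by (intro gmax) simp
      have b: "blinfun_apply g ((1 / norm y) *\<^sub>R (- y)) \<le> blinfun_apply g x0" using ny by (intro gmax) simp
      have a': "blinfun_apply g y \<le> blinfun_apply g x0 * norm y"
        using a ny by (simp add: blinfun.scaleR_right divide_le_eq mult.commute)
      have b': "- blinfun_apply g y \<le> blinfun_apply g x0 * norm y"
        using b ny by (simp add: blinfun.scaleR_right blinfun.minus_right divide_le_eq mult.commute
            divide_minus_left[symmetric] del: divide_minus_left)
      show ?thesis using a' b' by simp
    qed
  qed
  have gx0: "blinfun_apply g x0 \<le> norm g * norm x0" by (rule blinfun_le_norm)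
  have ngf: "\<bar>norm g - 1\<bar> \<le> \<eta>"
  proof -
    have "\<bar>norm g - norm f0\<bar> \<le> norm (g - f0)" by (rule norm_triangle_ineq3)
    then show ?thesis using nH f0(1) by (simp add: g_def)
  qed
  have ngpos: "norm g > 0" using ngf eta2 by linarith
  have gx0eq: "blinfun_apply g x0 = norm g" using ng gx0 x0 ngpos by (smt (verit) mult_left_le norm_ge_zero)
  have nx0: "norm x0 = 1"
  proof -
    have "norm g \<le> norm g * norm x0" using ng gx0 by linarith
    then have "1 \<le> norm x0" using ngpos by simp
    then show ?thesis using x0 by simp
  qed
  define a where "a = (1 / norm g) *\<^sub>R g"
  have na: "norm a = 1" using ngpos by (simp add: a_def)
  have ax0: "blinfun_apply a x0 = 1" using ngpos gx0eq by (simp add: a_def blinfun.scaleR_left)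
  have nag: "norm (a - g) = \<bar>norm g - 1\<bar>"
  proof -
    have "a - g = (1 / norm g - 1) *\<^sub>R g" by (simp add: a_def algebra_simps)
    then have "norm (a - g) = \<bar>1 / norm g - 1\<bar> * norm g" by simp
    also have "\<dots> = \<bar>(1 / norm g - 1) * norm g\<bar>" using ngpos by (simp add: abs_mult)
    also have "\<dots> = \<bar>1 - norm g\<bar>" using ngpos by (simp add: algebra_simps)
    finally show ?thesis by simp
  qed
  have naf: "norm (a - f0) \<le> 2 * \<eta>"
  proof -
    have "norm (a - f0) \<le> norm (a - g) + norm (g - f0)"
      using norm_triangle_ineq[of "a - g" "g - f0"] by simp
    also have "\<dots> \<le> \<eta> + \<eta>" using nag ngf nH by (simp add: g_def)
    finally show ?thesis by simp
  qed
  have "blinfun_apply V f0 - blinfun_apply V a \<le> norm V * norm (a - f0)"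
  proof -
    have "blinfun_apply V f0 - blinfun_apply V a = blinfun_apply V (f0 - a)" by (simp add: blinfun.diff_right)
    also have "\<dots> \<le> norm V * norm (f0 - a)" by (rule blinfun_le_norm)
    finally show ?thesis by (simp add: norm_minus_commute)
  qed
  also have "\<dots> \<le> norm V * (2 * \<eta>)" using naf by (simp add: mult_left_mono)
  also have "\<dots> \<le> \<delta> / 2"
  proof -
    have "norm V * (2 * \<eta>) \<le> norm V * (2 * (\<delta> / (4 * (norm V + 1))))"
      using eta3 by (intro mult_left_mono) auto
    also have "\<dots> = (\<delta> / 2) * (norm V / (norm V + 1))"
    proof -
      have "norm V + 1 \<noteq> 0" using norm_ge_zero[of V] by linarith
      then show ?thesis by (simp add: field_simps)
    qed
    also have "\<dots> \<le> (\<delta> / 2) * 1"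
    proof (intro mult_left_mono)
      have "norm V + 1 > 0" using norm_ge_zero[of V] by linarith
      then show "norm V / (norm V + 1) \<le> 1" by (simp add: divide_le_eq)
    qed (use d in simp)
    finally show ?thesis by simp
  qed
  finally have "blinfun_apply V a \<ge> norm V - \<delta>" using f0(2) by simp
  then show ?thesis using na nx0 ax0 by blast
qed



lemma continuous_on_canon[continuous_intros]:
  "continuous_on S f \<Longrightarrow> continuous_on S (\<lambda>x. canon (f x))"
  using bounded_linear.continuous_on[OF bounded_linear_canon] by blast

lemma continuous_on_Aof: "continuous_on S Aof"
  unfolding Aof_def by (intro continuous_intros)

lemma Aof_add: "Aof (p + q) = Aof p + Aof q"
  by (simp add: Aof_def canon_add algebra_simps)
lemma Aof_scaleR: "Aof (c *\<^sub>R p) = c *\<^sub>R Aof p"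
  by (simp add: Aof_def canon_scaleR algebra_simps)

lemma hfun_eq: "hfun p = (if snd (snd p) \<in> range canon \<and> norm (snd p) \<le> 1 then ereal (norm (Aof p)) else \<infinity>)"
  by (cases p) (auto simp: hfun_simp)

lemma epi_closed_convex:
  fixes D :: "(('a::real_normed_vector \<times> 'a dual) \<times> ('a dual \<times> 'a dual dual)) set"
  assumes cD: "closed D" and vD: "convex D"
  shows "ext_closed (\<lambda>w. if w \<in> D then ereal (norm (Aof w)) else \<infinity>)
       \<and> ext_convex (\<lambda>w. if w \<in> D then ereal (norm (Aof w)) else \<infinity>)"
proof -
  have E: "{(w, t::real). (if w \<in> D then ereal (norm (Aof w)) else \<infinity>) \<le> ereal t}
      = (D \<times> UNIV) \<inter> {z. norm (Aof (fst z)) \<le> snd z}" by (auto split: if_split_asm)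
  have "closed ((D \<times> UNIV) \<inter> {z. norm (Aof (fst z)) \<le> snd z})"
  proof (rule closed_Int)
    show "closed (D \<times> (UNIV :: real set))" using cD by (intro closed_Times) auto
    show "closed {z. norm (Aof (fst z)) \<le> snd (z :: _ \<times> real)}"
      by (rule closed_Collect_le) (intro continuous_intros continuous_on_compose2[OF continuous_on_Aof]; auto)+
  qed
  moreover have "convex ((D \<times> UNIV) \<inter> {z. norm (Aof (fst z)) \<le> snd (z :: _ \<times> real)})"
  proof (rule convexI)
    fix x y and u v :: real
    assume x: "x \<in> (D \<times> UNIV) \<inter> {z. norm (Aof (fst z)) \<le> snd z}"
      and y: "y \<in> (D \<times> UNIV) \<inter> {z. norm (Aof (fst z)) \<le> snd z}"
      and u: "0 \<le> u" and v: "0 \<le> v" and uv: "u + v = 1"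
    have "fst (u *\<^sub>R x + v *\<^sub>R y) = u *\<^sub>R fst x + v *\<^sub>R fst y" by simp
    moreover have "u *\<^sub>R fst x + v *\<^sub>R fst y \<in> D" using x y u v uv by (intro convexD[OF vD]) auto
    moreover have "norm (Aof (u *\<^sub>R fst x + v *\<^sub>R fst y)) \<le> u * snd x + v * snd y"
    proof -
      have "norm (Aof (u *\<^sub>R fst x + v *\<^sub>R fst y)) = norm (u *\<^sub>R Aof (fst x) + v *\<^sub>R Aof (fst y))"
        by (simp add: Aof_add Aof_scaleR)
      also have "\<dots> \<le> norm (u *\<^sub>R Aof (fst x)) + norm (v *\<^sub>R Aof (fst y))" by (rule norm_triangle_ineq)
      also have "\<dots> = u * norm (Aof (fst x)) + v * norm (Aof (fst y))" using u v by simp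
      also have "\<dots> \<le> u * snd x + v * snd y" using x y u v by (intro add_mono mult_left_mono) auto
      finally show ?thesis .
    qed
    ultimately show "u *\<^sub>R x + v *\<^sub>R y \<in> (D \<times> UNIV) \<inter> {z. norm (Aof (fst z)) \<le> snd z}"
      by (auto simp: mem_Times_iff)
  qed
  ultimately show ?thesis unfolding ext_closed_def ext_convex_def E by blast
qed

definition Dh :: "(('a::real_normed_vector \<times> 'a dual) \<times> ('a dual \<times> 'a dual dual)) set" where
  "Dh = {p. snd (snd p) \<in> range canon \<and> norm (snd p) \<le> 1}"
definition DJ :: "(('a::real_normed_vector \<times> 'a dual) \<times> ('a dual \<times> 'a dual dual)) set" where
  "DJ = {p. norm (snd p) \<le> 1}"

lemma hfun_D: "hfun = (\<lambda>w. if w \<in> Dh then ereal (norm (Aof w)) else \<infinity>)"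
  by (rule ext) (simp add: hfun_eq Dh_def)
lemma JZ_D: "JZ hfun = (\<lambda>w. if w \<in> DJ then ereal (norm (Aof w)) else \<infinity>)"
  by (rule ext) (simp add: JZ_formula DJ_def)

lemma closed_DJ: "closed DJ"
  unfolding DJ_def by (rule closed_Collect_le) (intro continuous_intros)+
lemma convex_DJ: "convex DJ"
proof (rule convexI)
  fix x y :: "('a \<times> 'a dual) \<times> ('a dual \<times> 'a dual dual)" and u v :: real
  assume "x \<in> DJ" "y \<in> DJ" "0 \<le> u" "0 \<le> v" "u + v = 1"
  then have "norm (u *\<^sub>R snd x + v *\<^sub>R snd y) \<le> u * 1 + v * 1"
    by (intro order_trans[OF norm_triangle_ineq] add_mono) (auto simp: DJ_def intro!: mult_left_le)
  then show "u *\<^sub>R x + v *\<^sub>R y \<in> DJ" using \<open>u + v = 1\<close> by (simp add: DJ_def)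
qed

lemma closed_Dh: "closed (Dh :: (('a::banach \<times> 'a dual) \<times> ('a dual \<times> 'a dual dual)) set)"
proof -
  have "Dh = snd -` (snd -` range canon) \<inter> DJ" by (auto simp: Dh_def DJ_def)
  moreover have "closed (snd -` (snd -` (range (canon :: 'a \<Rightarrow> _))) :: (('a \<times> 'a dual) \<times> ('a dual \<times> 'a dual dual)) set)"
    by (intro closed_vimage_snd closed_range_canon)
  ultimately show ?thesis using closed_DJ by (metis closed_Int)
qed

lemma convex_Dh: "convex Dh"
proof (rule convexI)
  fix x y :: "('a \<times> 'a dual) \<times> ('a dual \<times> 'a dual dual)" and u v :: real
  assume xy: "x \<in> Dh" "y \<in> Dh" and uv: "0 \<le> u" "0 \<le> v" "u + v = 1"
  then have "x \<in> DJ" "y \<in> DJ" by (auto simp: Dh_def DJ_def)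
  then have "u *\<^sub>R x + v *\<^sub>R y \<in> DJ" using uv convexD[OF convex_DJ] by blast
  moreover obtain a b where "snd (snd x) = canon a" "snd (snd y) = canon b" using xy by (auto simp: Dh_def)
  then have "snd (snd (u *\<^sub>R x + v *\<^sub>R y)) = canon (u *\<^sub>R a + v *\<^sub>R b)" by (simp add: canon_add canon_scaleR)
  ultimately show "u *\<^sub>R x + v *\<^sub>R y \<in> Dh" by (auto simp: Dh_def DJ_def)
qed

lemma T_char: "JZ hfun p = ereal (pairZ (fst p) (snd p)) \<longleftrightarrow> norm (snd p) \<le> 1 \<and> Psi (Aof p) (snd p) = norm (Aof p)"
  by (auto simp: JZ_formula pair_Psi)

lemma JZ_ge: "JZ hfun p \<ge> ereal (pairZ (fst p) (snd p))"
  by (auto simp: JZ_formula pair_Psi intro: Psi_le1)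

lemma hfun_ge: "hfun p \<ge> ereal (pairZ (fst p) (snd p))"
  by (auto simp: hfun_eq pair_Psi intro: Psi_le1)

lemma rel_expand: "pairZ (fst p - fst q) (snd p - snd q)
   = Psi (Aof p) (snd p) - Psi (Aof p) (snd q) - Psi (Aof q) (snd p) + Psi (Aof q) (snd q)"
proof -
  have "pairZ (fst p - fst q) (snd p - snd q) = pairZ (fst (p - q)) (snd (p - q))" by simp
  also have "\<dots> = Psi (Aof (p - q)) (snd (p - q))" by (rule pair_Psi)
  also have "\<dots> = Psi (Aof p - Aof q) (snd p - snd q)" by (simp add: Aof_diff)
  finally show ?thesis by (simp add: Psi_diff_left Psi_diff_right)
qed


lemma Psi_scale_left: "Psi (c *\<^sub>R A) w = c * Psi A w"
  by (cases A; cases w) (simp add: Psi_def blinfun.bilinear_simps algebra_simps)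

definition inT :: "('a::real_normed_vector \<times> 'a dual) \<times> ('a dual \<times> 'a dual dual) \<Rightarrow> bool" where
  "inT p \<longleftrightarrow> norm (snd p) \<le> 1 \<and> Psi (Aof p) (snd p) = norm (Aof p)"

lemma step2:
  assumes nq: "norm (snd q) \<le> 1"
    and rel: "\<And>p. inT p \<Longrightarrow> pairZ (fst p - fst q) (snd p - snd q) \<ge> 0"
  shows "Psi (Aof q) (snd q) = norm (Aof q)"
proof (rule antisym)
  show "Psi (Aof q) (snd q) \<le> norm (Aof q)" using nq by (rule Psi_le1)
  obtain a b where Aq: "Aof q = (a, b)" by (cases "Aof q")
  show "norm (Aof q) \<le> Psi (Aof q) (snd q)"
  proof (rule field_le_epsilon)
    fix e :: real assume e: "e > 0"
    obtain u y where uy: "norm (u, y) \<le> 1" "blinfun_apply a u + blinfun_apply b y \<ge> norm (a, b) - e"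
      using approx2[OF e, of a b] by blast
    define p where "p = ((u, - y), (y, canon u))"
    have np: "norm (snd p) = norm (u, y)" by (simp add: p_def norm_Pair add.commute)
    have Ap: "Aof p = 0" by (simp add: p_def zero_prod_def)
    have "inT p" using np uy(1) Ap by (simp add: inT_def)
    then have "pairZ (fst p - fst q) (snd p - snd q) \<ge> 0" by (rule rel)
    then have "Psi (Aof q) (snd p) \<le> Psi (Aof q) (snd q)" by (simp add: rel_expand Ap)
    moreover have "Psi (Aof q) (snd p) = blinfun_apply a u + blinfun_apply b y"
      by (simp add: Aq p_def Psi_def)
    ultimately show "norm (Aof q) \<le> Psi (Aof q) (snd q) + e" using uy(2) Aq by simp
  qed
qed

lemma step1:
  fixes q :: "('a::banach \<times> 'a dual) \<times> ('a dual \<times> 'a dual dual)"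
  assumes nt: "x1 \<noteq> (0::'a)"
    and rel: "\<And>p. inT p \<Longrightarrow> pairZ (fst p - fst q) (snd p - snd q) \<ge> 0"
  shows "norm (snd q) \<le> 1"
proof (rule ccontr)
  assume neg: "\<not> norm (snd q) \<le> 1"
  obtain v V where wq: "snd q = (v, V)" by (cases "snd q")
  define R where "R = norm (v, V)"
  have R: "R > 1" using neg wq R_def by simp
  define \<delta> where "\<delta> = (R - 1) / 4"
  have d: "\<delta> > 0" using R by (simp add: \<delta>_def)
  define z where "z = (1 / norm x1) *\<^sub>R x1"
  have nz: "norm z = 1" using nt by (simp add: z_def)
  obtain e where e: "norm e = 1" "blinfun_apply v e \<ge> norm v - \<delta>" using unit_approx[OF nz d, of v] by blast
  obtain y :: "'a dual" where y: "norm y \<le> 1" "blinfun_apply y e = 1" using norming[of e] e(1) by auto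
  have "1 \<le> norm y" using blinfun_le_norm[of y e] y(2) e(1) by simp
  then have ny: "norm y = 1" using y(1) by simp
  obtain a x0 where ax: "norm a = 1" "norm x0 = 1" "blinfun_apply a x0 = 1" "blinfun_apply V a \<ge> norm V - \<delta>"
    using bp[OF nt d, of V] by blast
  define s where "s = norm v / R"
  define t where "t = norm V / R"
  have s0: "s \<ge> 0" and t0: "t \<ge> 0" using R by (auto simp: s_def t_def)
  have R2: "R\<^sup>2 = (norm v)\<^sup>2 + (norm V)\<^sup>2" unfolding R_def by (simp add: norm_Pair)
  have st: "s\<^sup>2 + t\<^sup>2 = 1"
  proof -
    have "s\<^sup>2 + t\<^sup>2 = ((norm v)\<^sup>2 + (norm V)\<^sup>2) / R\<^sup>2" by (simp add: s_def t_def power_divide add_divide_distrib)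
    also have "\<dots> = R\<^sup>2 / R\<^sup>2" by (simp only: R2)
    finally show ?thesis using R by simp
  qed
  have s1: "s \<le> 1" and t1: "t \<le> 1"
  proof -
    have "s\<^sup>2 \<ge> 0" "t\<^sup>2 \<ge> 0" by simp_all
    then have "s\<^sup>2 \<le> 1" "t\<^sup>2 \<le> 1" using st by linarith+
    then show "s \<le> 1" "t \<le> 1" using s0 t0 by (simp_all add: power_le_one_iff)
  qed
  define A0 where "A0 = (t *\<^sub>R a, s *\<^sub>R canon e)"
  have nA0: "norm A0 = 1" using st s0 t0 ax(1) e(1) by (simp add: A0_def norm_Pair power_mult_distrib add.commute)
  define P where "P = Psi A0 (v, V)"
  have P: "P = s * blinfun_apply v e + t * blinfun_apply V a"
    by (simp add: P_def A0_def Psi_def blinfun.scaleR_right blinfun.scaleR_left)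
  have "P \<ge> s * (norm v - \<delta>) + t * (norm V - \<delta>)"
    unfolding P using e(2) ax(4) s0 t0 by (intro add_mono mult_left_mono) auto
  also have "s * (norm v - \<delta>) + t * (norm V - \<delta>) = ((norm v)\<^sup>2 + (norm V)\<^sup>2) / R - \<delta> * (s + t)"
    by (simp add: s_def t_def power2_eq_square algebra_simps add_divide_distrib diff_divide_distrib)
  also have "((norm v)\<^sup>2 + (norm V)\<^sup>2) / R = R"
  proof -
    have "((norm v)\<^sup>2 + (norm V)\<^sup>2) / R = (R * R) / R" unfolding R2[symmetric] by (simp add: power2_eq_square)
    then show ?thesis using R by simp
  qed
  finally have Pge: "P \<ge> R - \<delta> * (s + t)" .
  have "\<delta> * (s + t) \<le> \<delta> * 2" using s1 t1 d by (intro mult_left_mono) auto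
  then have P1: "P - 1 \<ge> (R - 1) / 2" using Pge by (simp add: \<delta>_def)
  have "(R - 1) / 2 > 0" using R by simp
  then have P1pos: "P - 1 > 0" using P1 by linarith
  define wp where "wp = (s *\<^sub>R y, canon (t *\<^sub>R x0))"
  define C where "C = Psi (Aof q) wp - Psi (Aof q) (snd q)"
  define pl where "pl lam = ((t *\<^sub>R x0 + (lam * s) *\<^sub>R e, - (s *\<^sub>R y) + (lam * t) *\<^sub>R a), wp)" for lam
  have Apl: "Aof (pl lam) = lam *\<^sub>R A0" for lam
    by (simp add: pl_def wp_def A0_def canon_add canon_scaleR algebra_simps)
  have nwp: "norm wp = 1" using st s0 t0 ny ax(2) by (simp add: wp_def norm_Pair power_mult_distrib)
  have Pwp: "Psi A0 wp = 1"
    using st y(2) ax(3) by (simp add: A0_def wp_def Psi_def blinfun.scaleR_right blinfun.scaleR_left power2_eq_square)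
  have inpl: "inT (pl lam)" if "lam \<ge> 0" for lam
  proof -
    have "snd (pl lam) = wp" by (simp add: pl_def)
    then show ?thesis using that nwp Pwp nA0 unfolding inT_def Apl by (simp add: Psi_scale_left)
  qed
  define lam where "lam = (\<bar>C\<bar> + 1) / (P - 1)"
  have lam0: "lam \<ge> 0" using P1pos by (simp add: lam_def)
  have "pairZ (fst (pl lam) - fst q) (snd (pl lam) - snd q) \<ge> 0" using inpl[OF lam0] by (rule rel)
  then have "0 \<le> Psi (Aof (pl lam)) (snd (pl lam)) - Psi (Aof (pl lam)) (snd q) - Psi (Aof q) (snd (pl lam)) + Psi (Aof q) (snd q)"
    by (simp only: rel_expand)
  moreover have "snd (pl lam) = wp" by (simp add: pl_def)
  ultimately have "0 \<le> lam - lam * P - C"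
    unfolding Apl Psi_scale_left by (simp add: Pwp P_def wq C_def)
  moreover have "lam * (P - 1) = \<bar>C\<bar> + 1" using P1pos by (simp add: lam_def)
  ultimately show False by (simp add: algebra_simps)
qed


lemma nontriv:
  assumes "\<not> surj (canon :: 'a::real_normed_vector \<Rightarrow> 'a dual dual)"
  shows "\<exists>x1::'a. x1 \<noteq> 0"
proof (rule ccontr)
  assume "\<not> ?thesis"
  then have all0: "\<And>x::'a. x = 0" by blast
  have f0: "f = 0" for f :: "'a dual"
    by (rule blinfun_eqI) (metis all0 blinfun.zero_left blinfun.zero_right)
  have "V = canon 0" for V :: "'a dual dual"
    by (rule blinfun_eqI) (metis f0 blinfun.zero_right canon_zero)
  then have "surj (canon :: 'a \<Rightarrow> 'a dual dual)" by (metis surjI)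
  then show False using assms by blast
qed

lemma inT_T: "JZ hfun p = ereal (pairZ (fst p) (snd p)) \<longleftrightarrow> inT p"
  by (simp add: T_char inT_def)

lemma monotone_inT: "inT p \<Longrightarrow> inT q \<Longrightarrow> pairZ (fst p - fst q) (snd p - snd q) \<ge> 0"
  unfolding rel_expand inT_def using Psi_le1[of "snd q" "Aof p"] Psi_le1[of "snd p" "Aof q"] by linarith

lemma inT_interior:
  assumes "inT p" "norm (snd p) < 1"
  shows "Aof p = 0"
proof -
  have "norm (Aof p) \<le> norm (Aof p) * norm (snd p)" using assms(1) Psi_le[of "Aof p" "snd p"] by (simp add: inT_def)
  then have "norm (Aof p) * (1 - norm (snd p)) \<le> 0" by (simp add: algebra_simps)
  moreover have "1 - norm (snd p) > 0" using assms(2) by simp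
  ultimately have "norm (Aof p) \<le> 0" by (simp add: mult_le_0_iff)
  then show ?thesis by simp
qed

lemma not_gossez:
  fixes T :: "(('a::banach \<times> 'a dual) \<times> ('a dual \<times> 'a dual dual)) set"
  assumes nonrefl: "\<not> surj (canon :: 'a \<Rightarrow> 'a dual dual)"
    and T: "T = {p. inT p}"
  shows "\<not> gossez_D T"
proof
  assume G: "gossez_D T"
  obtain Y where Y: "Y \<notin> range (canon :: 'a \<Rightarrow> _)" using nonrefl by blast
  have Yn: "Y \<noteq> 0" using Y by (metis canon_zero rangeI)
  define Y0 where "Y0 = (1 / (2 * norm Y)) *\<^sub>R Y"
  have nY0: "norm Y0 = 1/2" using Yn by (simp add: Y0_def)
  have Y0r: "Y0 \<notin> range canon"
  proof
    assume "Y0 \<in> range canon"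
    then obtain x where "Y0 = canon x" by blast
    moreover have "Y = (2 * norm Y) *\<^sub>R Y0" using Yn by (simp add: Y0_def)
    ultimately have "Y = canon ((2 * norm Y) *\<^sub>R x)" by (simp add: canon_scaleR)
    then show False using Y by blast
  qed
  define zss :: "'a dual dual \<times> 'a dual dual dual" where "zss = (Y0, 0)"
  define zs :: "'a dual \<times> 'a dual dual" where "zs = (0, Y0)"
  have rel: "pairZZ (zss - embZ (fst q)) (zs - snd q) \<ge> 0" if "q \<in> T" for q
  proof -
    obtain x xs ys yss where q: "q = ((x, xs), (ys, yss))" by (cases q) auto
    have iq: "inT q" using that T by simp
    have "pairZZ (zss - embZ (fst q)) (zs - snd q) = Psi (Aof q) (snd q) - blinfun_apply Y0 (xs + ys)"
      by (simp add: q zss_def zs_def embZ_def pairZZ_def Psi_def blinfun.bilinear_simps)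
    also have "\<dots> = norm (Aof q) - blinfun_apply Y0 (xs + ys)" using iq by (simp add: inT_def)
    also have "\<dots> \<ge> 0"
    proof -
      have "blinfun_apply Y0 (xs + ys) \<le> norm Y0 * norm (xs + ys)" by (rule blinfun_le_norm)
      also have "\<dots> \<le> norm (xs + ys)" using nY0 by (intro mult_left_le_one_le) auto
      also have "\<dots> \<le> norm (Aof q)" by (simp add: q norm_fst_le)
      finally show ?thesis by simp
    qed
    finally show ?thesis .
  qed
  then obtain F B where FB: "F \<noteq> bot" "B \<subseteq> T" "F \<le> principal B" "((\<lambda>p. snd p) \<longlongrightarrow> zs) F"
    using G unfolding gossez_D_def by blast
  have "Y0 \<in> closure (range canon)"
    unfolding closure_approachable
  proof (intro allI impI)
    fix \<epsilon> :: real assume eps: "\<epsilon> > 0"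
    define d where "d = min \<epsilon> (1/4)"
    have d: "d > 0" "d \<le> \<epsilon>" "d \<le> 1/4" using eps by (auto simp: d_def)
    have ev1: "eventually (\<lambda>p. p \<in> B) F" using FB(3) by (rule filter_leD) (simp add: eventually_principal)
    have ev2: "eventually (\<lambda>p. dist (snd p) zs < d) F" using FB(4) d(1) by (rule tendstoD)
    obtain p where p: "p \<in> B" "dist (snd p) zs < d"
      using eventually_happens[OF eventually_conj[OF ev1 ev2]] FB(1) by blast
    have ip: "inT p" using p(1) FB(2) T by auto
    obtain x xs ys yss where pe: "p = ((x, xs), (ys, yss))" by (cases p) auto
    have nzs: "norm zs = 1/2" using nY0 by (simp add: zs_def)
    have "norm (snd p) \<le> norm zs + norm (snd p - zs)" by (metis norm_triangle_sub add.commute)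
    also have "\<dots> < 1/2 + d" using p(2) nzs by (simp add: dist_norm)
    finally have "norm (snd p) < 1" using d(3) by simp
    then have "Aof p = 0" using ip inT_interior by blast
    then have cx: "canon x = yss" by (simp add: pe zero_prod_def)
    have "norm (yss - Y0) \<le> norm (snd p - zs)"
      using norm_snd_le[where x=ys and y="yss - Y0"] by (simp add: pe zs_def)
    then have "dist (canon x) Y0 < \<epsilon>" using p(2) d(2) cx by (simp add: dist_norm)
    then show "\<exists>y\<in>range canon. dist y Y0 < \<epsilon>" by blast
  qed
  moreover have "closure (range (canon :: 'a \<Rightarrow> 'a dual dual)) = range canon"
    using closed_range_canon by (rule closure_closed)
  ultimately have "Y0 \<in> range canon" by simp
  then show False using Y0r by blast
qed

theorem theorem5p2:
  fixes h :: "('a::banach \<times> 'a dual) \<times> ('a dual \<times> 'a dual dual) \<Rightarrow> ereal"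
    and T :: "(('a \<times> 'a dual) \<times> ('a dual \<times> 'a dual dual)) set"
  assumes nonrefl: "\<not> surj (canon :: 'a \<Rightarrow> 'a dual dual)"
    and h_def: "h = hfun"
    and T_def: "T = {p. JZ h p = ereal (pairZ (fst p) (snd p))}"
  shows "(ext_closed h \<and> ext_convex h \<and> bounded (snd ` {p. h p < \<infinity>})
          \<and> (\<forall>p. h p \<ge> ereal (pairZ (fst p) (snd p)))
          \<and> (\<forall>p. JZ h p \<ge> ereal (pairZ (fst p) (snd p))))
       \<and> (maximal_monotoneZ T \<and> bounded (snd ` T) \<and> fitz_family T (JZ h))
       \<and> \<not> gossez_D T"
proof -
  have T: "T = {p. inT p}" unfolding T_def h_def inT_T ..
  obtain x1 :: 'a where x1: "x1 \<noteq> 0" using nontriv[OF nonrefl] by blast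
  have P1: "ext_closed h \<and> ext_convex h"
    unfolding h_def hfun_D using epi_closed_convex[OF closed_Dh convex_Dh] .
  have P2: "bounded (snd ` {p. h p < \<infinity>})"
  proof (rule bounded_subset[OF bounded_cball[of 0 1]])
    show "snd ` {p. h p < \<infinity>} \<subseteq> cball 0 1"
      by (auto simp: h_def hfun_eq split: if_split_asm)
  qed
  have P3: "\<forall>p. h p \<ge> ereal (pairZ (fst p) (snd p))" using hfun_ge h_def by blast
  have P4: "\<forall>p. JZ h p \<ge> ereal (pairZ (fst p) (snd p))" using JZ_ge h_def by blast
  have mono: "monotone_opZ T" unfolding monotone_opZ_def T using monotone_inT by blast
  have maxi: "maximal_monotoneZ T" unfolding maximal_monotoneZ_def
  proof (intro conjI mono allI impI)
    fix S assume S: "monotone_opZ S \<and> T \<subseteq> S"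
    have "S \<subseteq> T"
    proof
      fix q assume qS: "q \<in> S"
      have rel: "pairZ (fst p - fst q) (snd p - snd q) \<ge> 0" if "inT p" for p
        using S qS that T unfolding monotone_opZ_def by blast
      have n: "norm (snd q) \<le> 1" using step1[OF x1 rel] by blast
      have "Psi (Aof q) (snd q) = norm (Aof q)" using step2[OF n rel] by blast
      then show "q \<in> T" using n T by (simp add: inT_def)
    qed
    then show "S = T" using S by blast
  qed
  have bT: "bounded (snd ` T)"
    by (rule bounded_subset[OF bounded_cball[of 0 1]]) (auto simp: T inT_def)
  have fitz: "fitz_family T (JZ h)"
    unfolding fitz_family_def
  proof (intro conjI)
    show "ext_convex (JZ h)" "ext_closed (JZ h)"
      unfolding h_def JZ_D using epi_closed_convex[OF closed_DJ convex_DJ] by blast+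
    show "\<forall>p. ereal (pairZ (fst p) (snd p)) \<le> JZ h p" using P4 by blast
    show "\<forall>p\<in>T. JZ h p = ereal (pairZ (fst p) (snd p))" using T_def by blast
  qed
  have ng: "\<not> gossez_D T" using not_gossez[OF nonrefl T] .
  show ?thesis using P1 P2 P3 P4 maxi bT fitz ng by blast
qed


end
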